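(* Let $r\ge1$, let $\mu=\langle\mu_1,\dots,\mu_{r+1}\rangle\in\mathbb{Z}^{r+1}$ with $\sum_i\mu_i=0$, and let $\Lambda\subseteq\Phi^+_{A_r}$. Let $\mathcal{T}=\Gamma(\Lambda)=\{T_{i,j}:\varepsilon_i-\varepsilon_{i+j}\in\Lambda\}$. Then $P_\Lambda(\mu)$ is in bijection with $\mathrm{JS}_{\mathcal{T}}(\langle\mu_1,\dots,\mu_r\rangle,\langle\mu_1+\cdots+\mu_r\rangle,r)$ (via juggling sequence $\mapsto$ multiset of roots $\varepsilon_i-\varepsilon_{i+j}$, one per throw at time $i$ to height $j$), and \[K_\Lambda(\mu)=\mathsf{js}_{\mathcal{T}}(\langle\mu_1,\dots,\mu_r\rangle,\langle\mu_1+\cdots+\mu_r\rangle,r).\]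
   Context: A juggling state is a finitely supported integer vector $\mathbf{s}=\langle s_1,s_2,\dots\rangle$ indexed by heights (trailing zeros omitted; negative entries are magic balls). A juggling sequence of length $n$ from $\mathbf{a}$ to $\mathbf{b}$ is a sequence $(\mathbf{s}_0,\dots,\mathbf{s}_n)$ with $\mathbf{s}_0=\mathbf{a}$, $\mathbf{s}_n=\mathbf{b}$, such that for each $1\le i\le n$ there are nonnegative integers $c^{(i)}_k$ (finitely many nonzero) with $\sum_k c^{(i)}_k=(\mathbf{s}_{i-1})_1$ and $(\mathbf{s}_i)_k=(\mathbf{s}_{i-1})_{k+1}+c^{(i)}_k$ for all $k\ge1$; $c^{(i)}_j$ is the number of throws at time $i$ to height $j$, and $T_{i,j}$ denotes "a throw at time $i$ to height $j$". For a set $\mathcal{T}$ of throws, $\mathrm{JS}_{\mathcal{T}}(\mathbf{a},\mathbf{b},n)$ is the set of juggling sequences in which $c^{(i)}_j>0$ only if $T_{i,j}\in\mathcal{T}$, and $\mathsf{js}_{\mathcal{T}}$ its cardinality. $\Phi^+_{A_r}=\{\varepsilon_i-\varepsilon_j:1\le i<j\le r+1\}\subset\mathbb{R}^{r+1}$; for $\Lambda\subseteq\Phi^+_{A_r}$, $P_\Lambda(\mu)$ is the set of finite multisets of elements of $\Lambda$ summing to $\mu$ and $K_\Lambda(\mu)=|P_\Lambda(\mu)|$. *)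

theory Defs
  imports Main "HOL-Library.Multiset"
begin

text \<open>Juggling states: integer vectors indexed by heights 1,2,...; represented as
  functions nat => int with the (unused) index 0 fixed to 0 and finite support.\<close>

definition juggling_state :: "(nat \<Rightarrow> int) \<Rightarrow> bool" where
  "juggling_state s \<longleftrightarrow> s 0 = 0 \<and> finite {k. s k \<noteq> 0}"

text \<open>One step of a juggling sequence at time i from state s to state t, with throws
  restricted to the set T of throws (a throw T_{i,j} is the pair (i,j)).
  The throw counts c k (k >= 1) are uniquely determined: c k = t k - s (k+1).\<close>

definition juggling_step :: "(nat \<times> nat) set \<Rightarrow> nat \<Rightarrow> (nat \<Rightarrow> int) \<Rightarrow> (nat \<Rightarrow> int) \<Rightarrow> bool" where
  "juggling_step T i s t \<longleftrightarrow>
     (\<exists>c :: nat \<Rightarrow> nat. c 0 = 0 \<and> finite {k. c k \<noteq> 0}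
        \<and> int (\<Sum>k\<in>{k. c k \<noteq> 0}. c k) = s 1
        \<and> (\<forall>k\<ge>1. t k = s (k + 1) + int (c k))
        \<and> (\<forall>k. 0 < c k \<longrightarrow> (i, k) \<in> T))"

definition JS :: "(nat \<times> nat) set \<Rightarrow> (nat \<Rightarrow> int) \<Rightarrow> (nat \<Rightarrow> int) \<Rightarrow> nat \<Rightarrow> (nat \<Rightarrow> int) list set" where
  "JS T a b n = {ss. length ss = n + 1 \<and> ss ! 0 = a \<and> ss ! n = b
      \<and> (\<forall>s\<in>set ss. juggling_state s)
      \<and> (\<forall>i\<in>{1..n}. juggling_step T i (ss ! (i - 1)) (ss ! i))}"

definition js :: "(nat \<times> nat) set \<Rightarrow> (nat \<Rightarrow> int) \<Rightarrow> (nat \<Rightarrow> int) \<Rightarrow> nat \<Rightarrow> nat" where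
  "js T a b n = card (JS T a b n)"

definition throw_count :: "(nat \<Rightarrow> int) list \<Rightarrow> nat \<Rightarrow> nat \<Rightarrow> nat" where
  "throw_count ss i j = nat ((ss ! i) j - (ss ! (i - 1)) (j + 1))"

text \<open>Vectors in Z^{r+1} as functions nat => int (coordinates 1..r+1).
  The root eps_i - eps_j.\<close>

definition root :: "nat \<Rightarrow> nat \<Rightarrow> (nat \<Rightarrow> int)" where
  "root i j = (\<lambda>k. (if k = i then 1 else 0) - (if k = j then 1 else 0))"

definition pos_roots_A :: "nat \<Rightarrow> (nat \<Rightarrow> int) set" where
  "pos_roots_A r = {root i j | i j. 1 \<le> i \<and> i < j \<and> j \<le> r + 1}"

definition vsum :: "(nat \<Rightarrow> int) multiset \<Rightarrow> (nat \<Rightarrow> int)" where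
  "vsum M = (\<lambda>k. \<Sum>x\<in>#M. x k)"

definition P_part :: "(nat \<Rightarrow> int) set \<Rightarrow> (nat \<Rightarrow> int) \<Rightarrow> (nat \<Rightarrow> int) multiset set" where
  "P_part \<Lambda> \<mu> = {M. set_mset M \<subseteq> \<Lambda> \<and> vsum M = \<mu>}"

definition K_part :: "(nat \<Rightarrow> int) set \<Rightarrow> (nat \<Rightarrow> int) \<Rightarrow> nat" where
  "K_part \<Lambda> \<mu> = card (P_part \<Lambda> \<mu>)"

definition Gamma :: "(nat \<Rightarrow> int) set \<Rightarrow> (nat \<times> nat) set" where
  "Gamma \<Lambda> = {(i, j). 1 \<le> i \<and> 1 \<le> j \<and> root i (i + j) \<in> \<Lambda>}"

definition js_to_roots :: "nat \<Rightarrow> (nat \<Rightarrow> int) list \<Rightarrow> (nat \<Rightarrow> int) multiset" where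
  "js_to_roots n ss = (\<Sum>i\<in>{1..n}. \<Sum>j\<in>{j. 1 \<le> j \<and> 0 < throw_count ss i j}.
        replicate_mset (throw_count ss i j) (root i (i + j)))"

end

theory Submission
  imports Defs
begin


lemma root_apply: "root i l k = (if k=i then 1 else 0) - (if k=l then 1 else 0)"
  by (simp add: root_def)

lemma root_inj: "i < l \<Longrightarrow> i' < l' \<Longrightarrow> root i l = root i' l' \<longleftrightarrow> i = i' \<and> l = l'"
proof
  assume a: "i < l" "i' < l'" and e: "root i l = root i' l'"
  have 1: "root i l i = root i' l' i" "root i l l = root i' l' l" using e by auto
  then show "i = i' \<and> l = l'" using a unfolding root_def by (auto split: if_splits)
qed auto

lemma pos_root_iff: "x \<in> pos_roots_A r \<longleftrightarrow> (\<exists>i j. 1\<le>i \<and> 1\<le>j \<and> i+j \<le> r+1 \<and> x = root i (i+j))"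
proof
  assume "x \<in> pos_roots_A r"
  then obtain i l where "x = root i l" "1 \<le> i" "i < l" "l \<le> r+1" unfolding pos_roots_A_def by blast
  then show "\<exists>i j. 1\<le>i \<and> 1\<le>j \<and> i+j \<le> r+1 \<and> x = root i (i+j)"
    by (intro exI[of _ i] exI[of _ "l-i"]) auto
next
  assume "\<exists>i j. 1\<le>i \<and> 1\<le>j \<and> i+j \<le> r+1 \<and> x = root i (i+j)"
  then obtain i j where "1\<le>i" "1\<le>j" "i+j \<le> r+1" "x = root i (i+j)" by blast
  then show "x \<in> pos_roots_A r" unfolding pos_roots_A_def by force
qed

lemma root_in_pos: "1\<le>i \<Longrightarrow> 1 \<le> j \<Longrightarrow> root i (i+j) \<in> pos_roots_A r \<longleftrightarrow> i + j \<le> r+1"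
proof
  assume a: "1\<le>i" "1\<le>j" "root i (i+j) \<in> pos_roots_A r"
  then obtain i' j' where "1\<le>i'" "1\<le>j'" "i'+j' \<le> r+1" "root i (i+j) = root i' (i'+j')"
    using pos_root_iff by blast
  with a root_inj[of i "i+j" i' "i'+j'"] show "i+j \<le> r+1" by auto
qed (auto simp: pos_root_iff)

definition Rm :: "nat \<Rightarrow> (nat \<Rightarrow> nat \<Rightarrow> nat) \<Rightarrow> (nat \<Rightarrow> int) multiset" where
  "Rm r m = (\<Sum>i\<in>{1..r}. \<Sum>j\<in>{1..r+1-i}. replicate_mset (m i j) (root i (i+j)))"

lemma count_Rm: "count (Rm r m) x = (\<Sum>i\<in>{1..r}. \<Sum>j\<in>{1..r+1-i}. if root i (i+j) = x then m i j else 0)"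
  unfolding Rm_def count_sum by (intro sum.cong refl) auto

lemma count_Rm_root:
  assumes "1\<le>i" "1\<le>j" "i+j\<le>r+1"
  shows "count (Rm r m) (root i (i+j)) = m i j"
proof -
  have "count (Rm r m) (root i (i+j)) = (\<Sum>i'\<in>{1..r}. \<Sum>j'\<in>{1..r+1-i'}. if i' = i then (if j' = j then m i j else 0) else 0)"
    unfolding count_Rm
    apply (intro sum.cong refl)
    using root_inj[of _ _ i "i+j"] assms by auto
  also have "\<dots> = (\<Sum>i'\<in>{1..r}. if i' = i then (\<Sum>j'\<in>{1..r+1-i'}. if j' = j then m i j else 0) else 0)"
    by (intro sum.cong refl) auto
  also have "\<dots> = m i j" using assms by (simp add: sum.delta) linarith
  finally show ?thesis .
qed

lemma count_Rm_nonpos: "x \<notin> pos_roots_A r \<Longrightarrow> count (Rm r m) x = 0"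
proof -
  assume x: "x \<notin> pos_roots_A r"
  show ?thesis unfolding count_Rm
  proof (intro sum.neutral ballI)
    fix i j assume "i \<in> {1..r}" "j \<in> {1..r+1-i}"
    then have "root i (i+j) \<in> pos_roots_A r" by (subst root_in_pos) auto
    then show "(if root i (i + j) = x then m i j else 0) = 0" using x by auto
  qed
qed

lemma Rm_count: "set_mset M \<subseteq> pos_roots_A r \<Longrightarrow> Rm r (\<lambda>i j. count M (root i (i+j))) = M"
proof (intro multiset_eqI)
  fix x assume s: "set_mset M \<subseteq> pos_roots_A r"
  show "count (Rm r (\<lambda>i j. count M (root i (i+j)))) x = count M x"
  proof (cases "x \<in> pos_roots_A r")
    case True
    then obtain i j where "1\<le>i" "1\<le>j" "i+j \<le> r+1" "x = root i (i+j)" using pos_root_iff by blast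
    then show ?thesis using count_Rm_root by simp
  next
    case False
    then show ?thesis using s count_Rm_nonpos by (metis count_eq_zero_iff subsetD)
  qed
qed

lemma Rm_cong: "(\<And>i j. 1\<le>i \<Longrightarrow> 1\<le>j \<Longrightarrow> i+j\<le>r+1 \<Longrightarrow> m i j = m' i j) \<Longrightarrow> Rm r m = Rm r m'"
  unfolding Rm_def by (intro sum.cong refl) auto

lemma set_Rm: "x \<in># Rm r m \<Longrightarrow> \<exists>i j. 1\<le>i \<and> 1\<le>j \<and> i+j\<le>r+1 \<and> m i j > 0 \<and> x = root i (i+j)"
proof -
  assume "x \<in># Rm r m"
  then obtain i j where "i \<in> {1..r}" "j \<in> {1..r+1-i}" "x \<in># replicate_mset (m i j) (root i (i+j))"
    unfolding Rm_def by (auto simp: set_mset_sum)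
  then show ?thesis by (intro exI[of _ i] exI[of _ j]) (auto split: if_splits)
qed

lemma vsum_add: "vsum (M + N) k = vsum M k + vsum N k"
  by (simp add: vsum_def)

lemma vsum_sum: "finite A \<Longrightarrow> vsum (sum f A) k = (\<Sum>a\<in>A. vsum (f a) k)"
  by (induction A rule: finite_induct) (auto simp: vsum_add, simp add: vsum_def)

lemma vsum_rep: "vsum (replicate_mset n x) k = int n * x k"
  by (simp add: vsum_def)

lemma vsum_Rm: "vsum (Rm r m) k = (\<Sum>i\<in>{1..r}. \<Sum>j\<in>{1..r+1-i}. int (m i j) * root i (i+j) k)"
  unfolding Rm_def by (simp add: vsum_sum vsum_rep)



lemma vsum_Rm_in:
  assumes k: "1 \<le> k" "k \<le> r+1"
  shows "vsum (Rm r m) k = (\<Sum>j\<in>{1..r+1-k}. int (m k j)) - (\<Sum>i\<in>{1..k-1}. int (m i (k-i)))"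
proof -
  have "vsum (Rm r m) k = (\<Sum>i\<in>{1..r}. \<Sum>j\<in>{1..r+1-i}. (if k = i then int (m i j) else 0) - (if k = i+j then int (m i j) else 0))"
    unfolding vsum_Rm root_apply by (intro sum.cong refl) (auto simp: algebra_simps)
  also have "\<dots> = (\<Sum>i\<in>{1..r}. \<Sum>j\<in>{1..r+1-i}. if k = i then int (m i j) else 0)
       - (\<Sum>i\<in>{1..r}. \<Sum>j\<in>{1..r+1-i}. if k = i+j then int (m i j) else 0)"
    by (simp only: sum_subtractf)
  also have "(\<Sum>i\<in>{1..r}. \<Sum>j\<in>{1..r+1-i}. if k = i then int (m i j) else 0) = (\<Sum>i\<in>{1..r}. if k = i then (\<Sum>j\<in>{1..r+1-i}. int (m i j)) else 0)"
    by (intro sum.cong refl) auto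
  also have "\<dots> = (\<Sum>j\<in>{1..r+1-k}. int (m k j))"
    using k by (cases "k = r+1") (auto simp: sum.delta)
  also have "(\<Sum>i\<in>{1..r}. \<Sum>j\<in>{1..r+1-i}. if k = i+j then int (m i j) else 0)
      = (\<Sum>i\<in>{1..r}. if i < k then int (m i (k-i)) else 0)"
  proof (intro sum.cong refl)
    fix i assume i: "i \<in> {1..r}"
    have "(\<Sum>j\<in>{1..r+1-i}. if k = i+j then int (m i j) else 0) = (\<Sum>j\<in>{1..r+1-i}. if j = k - i \<and> i < k then int (m i j) else 0)"
      by (intro sum.cong refl) auto
    also have "\<dots> = (if i < k then int (m i (k-i)) else 0)"
      using k i by (cases "i < k") (auto simp: sum.delta)
    finally show "(\<Sum>j\<in>{1..r+1-i}. if k = i+j then int (m i j) else 0) = (if i < k then int (m i (k-i)) else 0)" .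
  qed
  also have "\<dots> = (\<Sum>i\<in>{i\<in>{1..r}. i < k}. int (m i (k-i)))"
    by (rule sum.inter_filter[symmetric]) simp
  also have "{i\<in>{1..r}. i < k} = {1..k-1}" using k by auto
  finally show ?thesis .
qed

lemma vsum_Rm_out:
  assumes "k = 0 \<or> r+1 < k"
  shows "vsum (Rm r m) k = 0"
  unfolding vsum_Rm root_apply using assms by (intro sum.neutral ballI) auto



lemma gamma_bound: "(i,k) \<in> Gamma \<Lambda> \<Longrightarrow> \<Lambda> \<subseteq> pos_roots_A r \<Longrightarrow> 1\<le>i \<and> 1\<le>k \<and> i+k \<le> r+1 \<and> root i (i+k) \<in> \<Lambda>"
  unfolding Gamma_def using root_in_pos by blast

lemma JS_state: "ss \<in> JS T a b n \<Longrightarrow> i \<le> n \<Longrightarrow> juggling_state (ss!i)"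
  unfolding JS_def by auto

lemma JS_step:
  assumes ss: "ss \<in> JS (Gamma \<Lambda>) a b r" and L: "\<Lambda> \<subseteq> pos_roots_A r" and i: "1 \<le> i" "i \<le> r"
  shows "(\<forall>k\<ge>1. (ss!i) k = (ss!(i-1)) (k+1) + int (throw_count ss i k))
    \<and> (\<forall>k\<ge>1. 0 < throw_count ss i k \<longrightarrow> i+k \<le> r+1 \<and> root i (i+k) \<in> \<Lambda>)
    \<and> (ss!(i-1)) 1 = (\<Sum>k\<in>{1..r+1-i}. int (throw_count ss i k))"
proof -
  have "juggling_step (Gamma \<Lambda>) i (ss ! (i - 1)) (ss ! i)" using ss i unfolding JS_def by auto
  then obtain c :: "nat \<Rightarrow> nat" where c0: "c 0 = 0" and cf: "finite {k. c k \<noteq> 0}"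
    and cs: "int (\<Sum>k\<in>{k. c k \<noteq> 0}. c k) = (ss!(i-1)) 1"
    and ct: "\<forall>k\<ge>1. (ss!i) k = (ss!(i-1)) (k + 1) + int (c k)"
    and cT: "\<forall>k. 0 < c k \<longrightarrow> (i, k) \<in> Gamma \<Lambda>"
    unfolding juggling_step_def by blast
  have tc: "throw_count ss i k = c k" if "k \<ge> 1" for k
    using ct that unfolding throw_count_def by simp
  have cb: "c k \<noteq> 0 \<Longrightarrow> k \<in> {1..r+1-i}" for k
    using cT gamma_bound[OF _ L, of i k] by auto
  have "(\<Sum>k\<in>{k. c k \<noteq> 0}. c k) = (\<Sum>k\<in>{1..r+1-i}. c k)"
    by (rule sum.mono_neutral_left) (use cb in auto)
  also have "\<dots> = (\<Sum>k\<in>{1..r+1-i}. throw_count ss i k)"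
    using tc by (intro sum.cong refl) auto
  finally have "(ss!(i-1)) 1 = (\<Sum>k\<in>{1..r+1-i}. int (throw_count ss i k))"
    using cs by simp
  moreover have "\<forall>k\<ge>1. 0 < throw_count ss i k \<longrightarrow> i+k \<le> r+1 \<and> root i (i+k) \<in> \<Lambda>"
    using tc cT gamma_bound[OF _ L, of i] by auto
  moreover have "\<forall>k\<ge>1. (ss!i) k = (ss!(i-1)) (k+1) + int (throw_count ss i k)"
    using tc ct by auto
  ultimately show ?thesis by blast
qed

lemma JS_tc_zero:
  assumes ss: "ss \<in> JS (Gamma \<Lambda>) a b r" and L: "\<Lambda> \<subseteq> pos_roots_A r" and i: "1 \<le> i" "i \<le> r"
    and k: "k \<ge> 1" "r + 1 < i + k"
  shows "throw_count ss i k = 0"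
  using JS_step[OF ss L i] k by force

lemma JS_unroll:
  assumes ss: "ss \<in> JS (Gamma \<Lambda>) a b r" and L: "\<Lambda> \<subseteq> pos_roots_A r"
  shows "i \<le> r \<Longrightarrow> k \<ge> 1 \<Longrightarrow> (ss!i) k = a (i+k) + (\<Sum>i'\<in>{1..i}. int (throw_count ss i' (i+k-i')))"
proof (induction i arbitrary: k)
  case 0
  then show ?case using ss unfolding JS_def by simp
next
  case (Suc i)
  have "(ss!(Suc i)) k = (ss!i) (k+1) + int (throw_count ss (Suc i) k)"
    using JS_step[OF ss L, of "Suc i"] Suc.prems by auto
  also have "\<dots> = a (i+(k+1)) + (\<Sum>i'\<in>{1..i}. int (throw_count ss i' (i+(k+1)-i'))) + int (throw_count ss (Suc i) k)"
    using Suc by simp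
  also have "\<dots> = a (Suc i+k) + (\<Sum>i'\<in>{1..Suc i}. int (throw_count ss i' (Suc i+k-i')))"
    by simp
  finally show ?case .
qed

lemma js_to_roots_Rm:
  assumes ss: "ss \<in> JS (Gamma \<Lambda>) a b r" and L: "\<Lambda> \<subseteq> pos_roots_A r"
  shows "js_to_roots r ss = Rm r (throw_count ss)"
  unfolding js_to_roots_def Rm_def
proof (rule sum.cong[OF refl])
  fix i assume i: "i \<in> {1..r}"
  show "(\<Sum>j\<in>{j. 1 \<le> j \<and> 0 < throw_count ss i j}. replicate_mset (throw_count ss i j) (root i (i + j))) =
        (\<Sum>j\<in>{1..r+1-i}. replicate_mset (throw_count ss i j) (root i (i + j)))"
    by (rule sum.mono_neutral_left) (use JS_step[OF ss L, of i] i in auto)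
qed



definition gseq :: "nat \<Rightarrow> (nat \<Rightarrow> int) \<Rightarrow> (nat \<Rightarrow> int) multiset \<Rightarrow> (nat \<Rightarrow> int) list" where
  "gseq r a M = map (\<lambda>i k. if k = 0 then 0 else a (i+k) + (\<Sum>i'\<in>{1..i}. int (count M (root i' (i+k))))) [0..<r+1]"

lemma gseq_len: "length (gseq r a M) = r + 1"
  by (simp add: gseq_def)

lemma gseq_nth: assumes i: "i \<le> r" shows "gseq r a M ! i = (\<lambda>k. if k = 0 then 0 else a (i+k) + (\<Sum>i'\<in>{1..i}. int (count M (root i' (i+k)))))"
proof -
  have "gseq r a M ! i = (\<lambda>i k. if k = 0 then 0 else a (i+k) + (\<Sum>i'\<in>{1..i}. int (count M (root i' (i+k))))) ([0..<r+1] ! i)"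
    unfolding gseq_def by (rule nth_map) (use i in simp)
  also have "[0..<r+1] ! i = i" using i by (metis add.left_neutral le_imp_less_Suc nth_upt Suc_eq_plus1)
  finally show ?thesis by simp
qed

lemma gseq_step:
  assumes "1 \<le> i" "i \<le> r" "1 \<le> k"
  shows "(gseq r a M ! i) k = (gseq r a M ! (i-1)) (k+1) + int (count M (root i (i+k)))"
proof -
  obtain n where n: "i = Suc n" using assms by (cases i) auto
  show ?thesis using assms unfolding n by (simp add: gseq_nth sum.cl_ivl_Suc)
qed

lemma gseq_1: assumes i: "1 \<le> i" "i \<le> r"
  shows "(gseq r a M ! (i-1)) 1 = a i + (\<Sum>i'\<in>{1..i-1}. int (count M (root i' i)))"
proof -
  obtain n where n: "i = Suc n" using i by (cases i) auto
  have le: "n \<le> r" using i n by simp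
  show ?thesis unfolding n diff_Suc_1 gseq_nth[OF le] by simp
qed

lemma gseq_last: "(gseq r a M ! r) k = (if k = 0 then 0 else a (r+k) + (\<Sum>i'\<in>{1..r}. int (count M (root i' (r+k)))))"
  by (simp add: gseq_nth)

context
  fixes r :: nat and \<mu> :: "nat \<Rightarrow> int" and \<Lambda> :: "(nat \<Rightarrow> int) set"
  assumes mu_out: "\<forall>k. k \<notin> {1..r+1} \<longrightarrow> \<mu> k = 0"
    and mu_sum: "(\<Sum>i=1..r+1. \<mu> i) = 0"
    and L: "\<Lambda> \<subseteq> pos_roots_A r"
begin

abbreviation "aa \<equiv> (\<lambda>k. if 1 \<le> k \<and> k \<le> r then \<mu> k else 0)"
abbreviation "bb \<equiv> (\<lambda>k. if k = 1 then (\<Sum>i=1..r. \<mu> i) else 0)"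

lemma mu_last: "\<mu> (r+1) = - (\<Sum>i=1..r. \<mu> i)"
  using mu_sum by simp

lemma A1:
  assumes ss: "ss \<in> JS (Gamma \<Lambda>) aa bb r"
  shows "js_to_roots r ss \<in> P_part \<Lambda> \<mu>"
proof -
  note R = js_to_roots_Rm[OF ss L]
  have "set_mset (js_to_roots r ss) \<subseteq> \<Lambda>"
  proof
    fix x assume "x \<in># js_to_roots r ss"
    then obtain i j where "1\<le>i" "1\<le>j" "i+j\<le>r+1" "throw_count ss i j > 0" "x = root i (i+j)"
      using set_Rm R by fastforce
    then show "x \<in> \<Lambda>" using JS_step[OF ss L, of i] by auto
  qed
  moreover have "vsum (js_to_roots r ss) k = \<mu> k" for k
  proof -
    consider "1 \<le> k" "k \<le> r" | "k = r+1" | "k = 0 \<or> r+1 < k" by linarith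
    then show ?thesis
    proof cases
      case 1
      have "(ss!(k-1)) 1 = (\<Sum>j\<in>{1..r+1-k}. int (throw_count ss k j))"
        using JS_step[OF ss L, of k] 1 by auto
      moreover have "(ss!(k-1)) 1 = \<mu> k + (\<Sum>i'\<in>{1..k-1}. int (throw_count ss i' (k-i')))"
        using JS_unroll[OF ss L, of "k-1" 1] 1 by simp
      ultimately show ?thesis unfolding R using 1 by (simp add: vsum_Rm_in)
    next
      case 2
      have "ss ! r = bb" using ss unfolding JS_def by auto
      then have "(ss!r) 1 = (\<Sum>i=1..r. \<mu> i)" by simp
      moreover have "(ss!r) 1 = (\<Sum>i'\<in>{1..r}. int (throw_count ss i' (r+1-i')))"
        using JS_unroll[OF ss L, of r 1] by simp
      ultimately show ?thesis unfolding R using 2 mu_last by (simp add: vsum_Rm_in)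
    next
      case 3
      then show ?thesis unfolding R using mu_out by (auto simp: vsum_Rm_out)
    qed
  qed
  ultimately show ?thesis unfolding P_part_def by auto
qed

lemma A2:
  assumes ss: "ss \<in> JS (Gamma \<Lambda>) aa bb r"
  shows "gseq r aa (js_to_roots r ss) = ss"
proof (rule nth_equalityI)
  show "length (gseq r aa (js_to_roots r ss)) = length ss" using ss by (simp add: gseq_len JS_def)
next
  fix i assume "i < length (gseq r aa (js_to_roots r ss))"
  then have i: "i \<le> r" by (simp add: gseq_len)
  show "gseq r aa (js_to_roots r ss) ! i = ss ! i"
  proof
    fix k
    show "(gseq r aa (js_to_roots r ss) ! i) k = (ss ! i) k"
    proof (cases "k = 0")
      case True
      then show ?thesis using JS_state[OF ss i] by (simp add: gseq_nth i juggling_state_def)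
    next
      case False
      have "(\<Sum>i'\<in>{1..i}. int (count (js_to_roots r ss) (root i' (i+k)))) = (\<Sum>i'\<in>{1..i}. int (throw_count ss i' (i+k-i')))"
      proof (rule sum.cong[OF refl])
        fix i' assume i': "i' \<in> {1..i}"
        have e: "root i' (i+k) = root i' (i' + (i+k-i'))" using i' by simp
        show "int (count (js_to_roots r ss) (root i' (i+k))) = int (throw_count ss i' (i+k-i'))"
        proof (cases "i+k \<le> r+1")
          case True
          then show ?thesis unfolding js_to_roots_Rm[OF ss L] e using i' False by (subst count_Rm_root) auto
        next
          case nt: False
          have "root i' (i' + (i+k-i')) \<notin> pos_roots_A r" using i' False nt by (subst root_in_pos) auto
          then show ?thesis unfolding js_to_roots_Rm[OF ss L] e using i' i False nt
            using JS_tc_zero[OF ss L, of i' "i+k-i'"] by (simp add: count_Rm_nonpos)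
        qed
      qed
      then show ?thesis using False i JS_unroll[OF ss L i, of k] by (simp add: gseq_nth)
    qed
  qed
qed

lemma B_aux:
  assumes M: "M \<in> P_part \<Lambda> \<mu>"
  shows "set_mset M \<subseteq> pos_roots_A r" "Rm r (\<lambda>i j. count M (root i (i+j))) = M"
    "\<And>k. vsum (Rm r (\<lambda>i j. count M (root i (i+j)))) k = \<mu> k"
proof -
  show s: "set_mset M \<subseteq> pos_roots_A r" using M L unfolding P_part_def by auto
  show e: "Rm r (\<lambda>i j. count M (root i (i+j))) = M" using Rm_count[OF s] .
  show "\<And>k. vsum (Rm r (\<lambda>i j. count M (root i (i+j)))) k = \<mu> k" unfolding e using M unfolding P_part_def by auto
qed

lemma count_nonpos: "M \<in> P_part \<Lambda> \<mu> \<Longrightarrow> x \<notin> pos_roots_A r \<Longrightarrow> count M x = 0"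
  using B_aux(1) by (meson count_inI subsetD)

lemma B1:
  assumes M: "M \<in> P_part \<Lambda> \<mu>"
  shows "gseq r aa M \<in> JS (Gamma \<Lambda>) aa bb r"
proof -
  define m where "m = (\<lambda>i j. count M (root i (i+j)))"
  have V: "vsum (Rm r m) k = \<mu> k" for k using B_aux(3)[OF M] unfolding m_def .
  have MsL: "set_mset M \<subseteq> \<Lambda>" using M unfolding P_part_def by auto
  let ?s = "gseq r aa M"
  have s0: "?s ! 0 = aa" by (rule ext) (simp add: gseq_nth)
  have sr: "?s ! r = bb"
  proof
    fix k :: nat
    have gl: "\<And>k. (?s ! r) k = (if k = 0 then 0 else aa (r+k) + (\<Sum>i'\<in>{1..r}. int (count M (root i' (r+k)))))"
      by (rule gseq_last)
    consider "k = 0" | "k = 1" | "k \<ge> 2" by linarith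
    then show "(?s ! r) k = bb k"
    proof cases
      case 1 then show ?thesis using gl[of 0] by simp
    next
      case 2
      have e1: "(\<Sum>i'\<in>{1..r}. int (count M (root i' (r+1)))) = (\<Sum>i'\<in>{1..r}. int (m i' (r+1-i')))"
        unfolding m_def by (intro sum.cong refl) auto
      have e2: "vsum (Rm r m) (r+1) = (\<Sum>j\<in>{1..r+1-(r+1)}. int (m (r+1) j)) - (\<Sum>i'\<in>{1..r+1-1}. int (m i' (r+1-i')))"
        by (rule vsum_Rm_in) auto
      have e3: "(\<Sum>j\<in>{1..r+1-(r+1)}. int (m (r+1) j)) = 0" by simp
      have e4: "{1..r+1-1} = {1..r}" by simp
      have g1: "(?s ! r) 1 = (\<Sum>i'\<in>{1..r}. int (count M (root i' (r+1))))"
        using gl[of 1] by simp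
      have "(?s ! r) 1 = - \<mu> (r+1)" using e1 e2 e3 g1 V[of "r+1"] unfolding e4 by linarith
      then show ?thesis unfolding 2 using mu_last by simp
    next
      case 3
      have "count M (root i' (r+k)) = 0" if "i' \<in> {1..r}" for i'
      proof -
        have "root i' (i' + (r+k-i')) \<notin> pos_roots_A r" using that 3 by (subst root_in_pos) auto
        then show ?thesis using count_nonpos[OF M] that by simp
      qed
      then have "(\<Sum>i'\<in>{1..r}. int (count M (root i' (r+k)))) = 0" by simp
      then show ?thesis using 3 gl[of k] by simp
    qed
  qed
  have states: "juggling_state (?s ! i)" if "i \<le> r" for i
  proof -
    have "{k. (?s ! i) k \<noteq> 0} \<subseteq> {..r+1}"
    proof
      fix k assume k: "k \<in> {k. (?s ! i) k \<noteq> 0}"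
      show "k \<in> {..r+1}"
      proof (rule ccontr)
        assume nk: "k \<notin> {..r+1}"
        have "count M (root i' (i+k)) = 0" if "i' \<in> {1..i}" for i'
        proof -
          have "root i' (i' + (i+k-i')) \<notin> pos_roots_A r" using that nk by (subst root_in_pos) auto
          then show ?thesis using count_nonpos[OF M] that by simp
        qed
        then have "(?s ! i) k = 0" using nk that by (simp add: gseq_nth)
        then show False using k by simp
      qed
    qed
    then have "finite {k. (?s ! i) k \<noteq> 0}" using finite_subset by blast
    moreover have "(?s ! i) 0 = 0" using that by (simp add: gseq_nth)
    ultimately show ?thesis unfolding juggling_state_def by blast
  qed
  have steps: "juggling_step (Gamma \<Lambda>) i (?s ! (i-1)) (?s ! i)" if i: "1 \<le> i" "i \<le> r" for i
    unfolding juggling_step_def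
  proof (intro exI[of _ "\<lambda>k. if k = 0 then 0 else m i k"] conjI allI impI)
    let ?c = "\<lambda>k. if k = 0 then 0 else m i k"
    have cb: "?c k \<noteq> 0 \<Longrightarrow> k \<in> {1..r+1-i}" for k
    proof -
      assume c: "?c k \<noteq> 0"
      then have "k \<ge> 1" "root i (i+k) \<in># M" unfolding m_def by (auto split: if_splits)
      then have "root i (i+k) \<in> pos_roots_A r" using MsL L by auto
      then have "i + k \<le> r + 1" using \<open>k \<ge> 1\<close> i root_in_pos by blast
      then show ?thesis using \<open>k \<ge> 1\<close> by auto
    qed
    have "{k. ?c k \<noteq> 0} \<subseteq> {1..r+1-i}" using cb by blast
    then show "finite {k. ?c k \<noteq> 0}" using finite_subset by blast
    have "(\<Sum>k\<in>{k. ?c k \<noteq> 0}. ?c k) = (\<Sum>k\<in>{1..r+1-i}. ?c k)"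
      by (rule sum.mono_neutral_left) (use cb in auto)
    also have "\<dots> = (\<Sum>k\<in>{1..r+1-i}. m i k)" by (intro sum.cong refl) auto
    finally have e1: "int (\<Sum>k\<in>{k. ?c k \<noteq> 0}. ?c k) = (\<Sum>k\<in>{1..r+1-i}. int (m i k))" by simp
    have V': "\<mu> i = (\<Sum>j\<in>{1..r+1-i}. int (m i j)) - (\<Sum>i'\<in>{1..i-1}. int (m i' (i-i')))"
    proof -
      have "vsum (Rm r m) i = (\<Sum>j\<in>{1..r+1-i}. int (m i j)) - (\<Sum>i'\<in>{1..i-1}. int (m i' (i-i')))"
        by (rule vsum_Rm_in) (use i in auto)
      then show ?thesis using V[of i] by linarith
    qed
    have ii: "i - 1 + 1 = i" using i by simp
    have s1: "(?s ! (i-1)) 1 = aa i + (\<Sum>i'\<in>{1..i-1}. int (count M (root i' i)))"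
      by (rule gseq_1[OF i])
    have s2: "(\<Sum>i'\<in>{1..i-1}. int (count M (root i' i))) = (\<Sum>i'\<in>{1..i-1}. int (m i' (i-i')))"
      unfolding m_def by (intro sum.cong refl) auto
    have "aa i = \<mu> i" using i by simp
    then show "int (\<Sum>k\<in>{k. ?c k \<noteq> 0}. ?c k) = (?s ! (i-1)) 1"
      using e1 V' s1 s2 by linarith
  next
    fix k :: nat assume k: "1 \<le> k"
    show "(?s ! i) k = (?s ! (i-1)) (k+1) + int (if k = 0 then 0 else m i k)"
      using gseq_step[OF i k] k unfolding m_def by simp
  next
    fix k assume "0 < (if k = 0 then 0 else m i k)"
    then have "k \<ge> 1" "root i (i+k) \<in># M" unfolding m_def by (auto split: if_splits)
    then show "(i, k) \<in> Gamma \<Lambda>" using MsL i unfolding Gamma_def by auto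
  qed simp
  have st: "\<forall>s\<in>set ?s. juggling_state s"
  proof
    fix s assume "s \<in> set ?s"
    then obtain i where i1: "i < length ?s" and i2': "?s ! i = s" unfolding in_set_conv_nth by blast
    have i2: "s = ?s ! i" using i2' by simp
    from i1 have "i \<le> r" unfolding gseq_len by simp
    then show "juggling_state s" unfolding i2 by (rule states)
  qed
  have stp: "\<forall>i\<in>{1..r}. juggling_step (Gamma \<Lambda>) i (?s ! (i-1)) (?s ! i)"
  proof
    fix i assume "i \<in> {1..r}"
    then have "1 \<le> i" "i \<le> r" by auto
    then show "juggling_step (Gamma \<Lambda>) i (?s ! (i-1)) (?s ! i)" by (rule steps)
  qed
  have len: "length ?s = r + 1" by (rule gseq_len)
  show ?thesis unfolding JS_def mem_Collect_eq
    by (intro conjI) (fact len, fact s0, fact sr, fact st, fact stp)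
qed

lemma B2:
  assumes M: "M \<in> P_part \<Lambda> \<mu>"
  shows "js_to_roots r (gseq r aa M) = M"
proof -
  have "js_to_roots r (gseq r aa M) = Rm r (throw_count (gseq r aa M))"
    by (rule js_to_roots_Rm[OF B1[OF M] L])
  also have "\<dots> = Rm r (\<lambda>i j. count M (root i (i+j)))"
  proof (rule Rm_cong)
    fix i j :: nat assume "1 \<le> i" "1 \<le> j" "i + j \<le> r + 1"
    then show "throw_count (gseq r aa M) i j = count M (root i (i+j))"
      unfolding throw_count_def using gseq_step[of i r j aa M] by simp
  qed
  also have "\<dots> = M" using B_aux(2)[OF M] .
  finally show ?thesis .
qed

lemma main_bij: "bij_betw (js_to_roots r) (JS (Gamma \<Lambda>) aa bb r) (P_part \<Lambda> \<mu>)"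
proof (rule bij_betw_byWitness[where f'="gseq r aa"])
  show "\<forall>a\<in>JS (Gamma \<Lambda>) aa bb r. gseq r aa (js_to_roots r a) = a" using A2 by blast
  show "\<forall>a'\<in>P_part \<Lambda> \<mu>. js_to_roots r (gseq r aa a') = a'" using B2 by blast
  show "js_to_roots r ` JS (Gamma \<Lambda>) aa bb r \<subseteq> P_part \<Lambda> \<mu>" using A1 by blast
  show "gseq r aa ` P_part \<Lambda> \<mu> \<subseteq> JS (Gamma \<Lambda>) aa bb r" using B1 by blast
qed

end

theorem mainTheorem6:
  fixes r :: nat and \<mu> :: "nat \<Rightarrow> int" and \<Lambda> :: "(nat \<Rightarrow> int) set"
  assumes "r \<ge> 1"
    and "\<forall>k. k \<notin> {1..r+1} \<longrightarrow> \<mu> k = 0"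
    and "(\<Sum>i=1..r+1. \<mu> i) = 0"
    and "\<Lambda> \<subseteq> pos_roots_A r"
  shows "bij_betw (js_to_roots r)
           (JS (Gamma \<Lambda>) (\<lambda>k. if 1 \<le> k \<and> k \<le> r then \<mu> k else 0)
                         (\<lambda>k. if k = 1 then (\<Sum>i=1..r. \<mu> i) else 0) r)
           (P_part \<Lambda> \<mu>)
       \<and> K_part \<Lambda> \<mu> = js (Gamma \<Lambda>) (\<lambda>k. if 1 \<le> k \<and> k \<le> r then \<mu> k else 0)
                         (\<lambda>k. if k = 1 then (\<Sum>i=1..r. \<mu> i) else 0) r"
proof -
  have b: "bij_betw (js_to_roots r)
           (JS (Gamma \<Lambda>) (\<lambda>k. if 1 \<le> k \<and> k \<le> r then \<mu> k else 0)
                         (\<lambda>k. if k = 1 then (\<Sum>i=1..r. \<mu> i) else 0) r)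
           (P_part \<Lambda> \<mu>)"
    by (rule main_bij[OF assms(2,3,4)])
  moreover have "K_part \<Lambda> \<mu> = js (Gamma \<Lambda>) (\<lambda>k. if 1 \<le> k \<and> k \<le> r then \<mu> k else 0)
                         (\<lambda>k. if k = 1 then (\<Sum>i=1..r. \<mu> i) else 0) r"
    unfolding K_part_def js_def using bij_betw_same_card[OF b] by simp
  ultimately show ?thesis by blast
qed


end
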